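(* Let $D\ge1$, let $X=\{0,1\}^D$, and let $Q_D$ be the $D$-dimensional hypercube on $X$. For a real matrix $B$ with rows and columns indexed by $X$, the following are equivalent: (i) $B_{xy}=0$ for all $x,y\in X$ that are neither equal nor adjacent in $Q_D$; (ii) for all $1\le i<j\le D$, $$\alpha^*_i\alpha^*_jB-\alpha^*_iB\alpha^*_j-\alpha^*_jB\alpha^*_i+B\alpha^*_i\alpha^*_j=0.$$
   Context: $Q_D$ is the graph with vertex set $X=\{0,1\}^D$ (sequences $x=(x_1,\ldots,x_D)$), two vertices adjacent iff they differ in exactly one coordinate. For $1\le i\le D$, $\alpha^*_i$ is the diagonal matrix with $(x,x)$-entry $1$ if $x_i=0$ and $-1$ if $x_i=1$. *)

theory Defs
  imports "HOL-Analysis.Analysis"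
begin

text \<open>Vertex set X = {0,1}^D, represented as boolean lists of length D
  (True = 1, False = 0); coordinate x_i (1 <= i <= D) is x ! (i - 1).\<close>
definition cube :: "nat \<Rightarrow> bool list set" where
  "cube D = {x. length x = D}"

definition cube_adj :: "nat \<Rightarrow> bool list \<Rightarrow> bool list \<Rightarrow> bool" where
  "cube_adj D x y \<longleftrightarrow> x \<in> cube D \<and> y \<in> cube D \<and>
     card {k. k < D \<and> x ! k \<noteq> y ! k} = 1"

type_synonym mat = "bool list \<Rightarrow> bool list \<Rightarrow> real"

definition mmul :: "nat \<Rightarrow> mat \<Rightarrow> mat \<Rightarrow> mat" where
  "mmul D A B = (\<lambda>x y. \<Sum>z\<in>cube D. A x z * B z y)"

definition alpha_star :: "nat \<Rightarrow> mat" where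
  "alpha_star i = (\<lambda>x y. if x = y then (if x ! (i - 1) then -1 else 1) else 0)"

end

theory Submission
  imports Defs
begin

lemma fin_cube: "finite (cube D)"
proof -
  have "cube D = {xs. set xs \<subseteq> (UNIV::bool set) \<and> length xs = D}" by (auto simp: cube_def)
  thus ?thesis using finite_lists_length_eq[of "UNIV::bool set" D] by simp
qed

lemma mmul_left:
  assumes "x \<in> cube D" "\<forall>z\<in>cube D. A x z = (if x = z then c else 0)"
  shows "mmul D A M x y = c * M x y"
proof -
  have "mmul D A M x y = (\<Sum>z\<in>cube D. (if x = z then c * M z y else 0))"
    unfolding mmul_def by (rule sum.cong) (auto simp: assms(2))
  also have "\<dots> = c * M x y" using fin_cube[of D] assms(1) by (simp add: sum.delta)
  finally show ?thesis .
qed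

lemma mmul_right:
  assumes "y \<in> cube D" "\<forall>z\<in>cube D. A z y = (if z = y then c else 0)"
  shows "mmul D M A x y = M x y * c"
proof -
  have "mmul D M A x y = (\<Sum>z\<in>cube D. (if y = z then M x z * c else 0))"
    unfolding mmul_def by (rule sum.cong) (auto simp: assms(2))
  also have "\<dots> = M x y * c" using fin_cube[of D] assms(1) by (simp add: sum.delta)
  finally show ?thesis .
qed

definition sg :: "nat \<Rightarrow> bool list \<Rightarrow> real" where
  "sg i x = (if x ! (i - 1) then -1 else 1)"

lemma as_row: "\<forall>z\<in>cube D. alpha_star i x z = (if x = z then sg i x else 0)"
  by (simp add: alpha_star_def sg_def)
lemma as_col: "\<forall>z\<in>cube D. alpha_star i z y = (if z = y then sg i y else 0)"
  by (auto simp: alpha_star_def sg_def)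

lemma expr:
  assumes "x \<in> cube D" "y \<in> cube D"
  shows "mmul D (mmul D (alpha_star i) (alpha_star j)) B x y
         - mmul D (mmul D (alpha_star i) B) (alpha_star j) x y
         - mmul D (mmul D (alpha_star j) B) (alpha_star i) x y
         + mmul D (mmul D B (alpha_star i)) (alpha_star j) x y
       = B x y * (sg i x - sg i y) * (sg j x - sg j y)"
proof -
  have r: "\<forall>z\<in>cube D. mmul D (alpha_star i) (alpha_star j) x z = (if x = z then sg i x * sg j x else 0)"
    using mmul_left[where A="alpha_star i" and c="sg i x" and M="alpha_star j", OF assms(1) as_row] by (simp add: alpha_star_def sg_def)
  have 1: "mmul D (mmul D (alpha_star i) (alpha_star j)) B x y = sg i x * sg j x * B x y"
    by (rule mmul_left[where A="mmul D (alpha_star i) (alpha_star j)" and c="sg i x * sg j x", OF assms(1) r])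
  have 2: "mmul D (mmul D (alpha_star i) B) (alpha_star j) x y = sg i x * B x y * sg j y"
    using mmul_right[where A="alpha_star j" and c="sg j y" and M="mmul D (alpha_star i) B" and x=x, OF assms(2) as_col] mmul_left[where A="alpha_star i" and c="sg i x" and M=B and y=y, OF assms(1) as_row] by simp
  have 3: "mmul D (mmul D (alpha_star j) B) (alpha_star i) x y = sg j x * B x y * sg i y"
    using mmul_right[where A="alpha_star i" and c="sg i y" and M="mmul D (alpha_star j) B" and x=x, OF assms(2) as_col] mmul_left[where A="alpha_star j" and c="sg j x" and M=B and y=y, OF assms(1) as_row] by simp
  have 4: "mmul D (mmul D B (alpha_star i)) (alpha_star j) x y = B x y * sg i y * sg j y"
    using mmul_right[where A="alpha_star j" and c="sg j y" and M="mmul D B (alpha_star i)" and x=x, OF assms(2) as_col] mmul_right[where A="alpha_star i" and c="sg i y" and M=B and x=x, OF assms(2) as_col] by simp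
  show ?thesis unfolding 1 2 3 4 by (simp add: algebra_simps)
qed

lemma sg_diff: "(sg i x - sg i y = 0) \<longleftrightarrow> x ! (i - 1) = y ! (i - 1)"
  by (simp add: sg_def)

theorem lemma7p2:
  fixes D :: nat and B :: mat
  assumes "D \<ge> 1"
  shows "(\<forall>x\<in>cube D. \<forall>y\<in>cube D. x \<noteq> y \<and> \<not> cube_adj D x y \<longrightarrow> B x y = 0)
     \<longleftrightarrow>
     (\<forall>i j. 1 \<le> i \<and> i < j \<and> j \<le> D \<longrightarrow>
        (\<forall>x\<in>cube D. \<forall>y\<in>cube D.
           mmul D (mmul D (alpha_star i) (alpha_star j)) B x y
         - mmul D (mmul D (alpha_star i) B) (alpha_star j) x y
         - mmul D (mmul D (alpha_star j) B) (alpha_star i) x y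
         + mmul D (mmul D B (alpha_star i)) (alpha_star j) x y = 0))"
proof
  assume H: "\<forall>x\<in>cube D. \<forall>y\<in>cube D. x \<noteq> y \<and> \<not> cube_adj D x y \<longrightarrow> B x y = 0"
  show "\<forall>i j. 1 \<le> i \<and> i < j \<and> j \<le> D \<longrightarrow> (\<forall>x\<in>cube D. \<forall>y\<in>cube D.
           mmul D (mmul D (alpha_star i) (alpha_star j)) B x y
         - mmul D (mmul D (alpha_star i) B) (alpha_star j) x y
         - mmul D (mmul D (alpha_star j) B) (alpha_star i) x y
         + mmul D (mmul D B (alpha_star i)) (alpha_star j) x y = 0)"
  proof (intro allI impI ballI)
    fix i j x y assume ij: "1 \<le> i \<and> i < j \<and> j \<le> D" and x: "x \<in> cube D" and y: "y \<in> cube D"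
    have "B x y * (sg i x - sg i y) * (sg j x - sg j y) = 0"
    proof (cases "B x y = 0 \<or> x = y")
      case True thus ?thesis by auto
    next
      case False
      with H x y have adj: "cube_adj D x y" by auto
      show ?thesis
      proof (rule ccontr)
        assume "B x y * (sg i x - sg i y) * (sg j x - sg j y) \<noteq> 0"
        hence a: "x ! (i - 1) \<noteq> y ! (i - 1)" "x ! (j - 1) \<noteq> y ! (j - 1)"
          using sg_diff by auto
        have "{i - 1, j - 1} \<subseteq> {k. k < D \<and> x ! k \<noteq> y ! k}" using a ij by auto
        moreover have "card {i - 1, j - 1} = 2" using ij by auto
        ultimately have "2 \<le> card {k. k < D \<and> x ! k \<noteq> y ! k}"
          by (metis card_mono finite_Collect_conjI finite_Collect_less_nat)
        thus False using adj by (simp add: cube_adj_def)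
      qed
    qed
    thus "mmul D (mmul D (alpha_star i) (alpha_star j)) B x y
         - mmul D (mmul D (alpha_star i) B) (alpha_star j) x y
         - mmul D (mmul D (alpha_star j) B) (alpha_star i) x y
         + mmul D (mmul D B (alpha_star i)) (alpha_star j) x y = 0"
      using expr[OF x y] by simp
  qed
next
  assume H: "\<forall>i j. 1 \<le> i \<and> i < j \<and> j \<le> D \<longrightarrow> (\<forall>x\<in>cube D. \<forall>y\<in>cube D.
           mmul D (mmul D (alpha_star i) (alpha_star j)) B x y
         - mmul D (mmul D (alpha_star i) B) (alpha_star j) x y
         - mmul D (mmul D (alpha_star j) B) (alpha_star i) x y
         + mmul D (mmul D B (alpha_star i)) (alpha_star j) x y = 0)"
  show "\<forall>x\<in>cube D. \<forall>y\<in>cube D. x \<noteq> y \<and> \<not> cube_adj D x y \<longrightarrow> B x y = 0"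
  proof (intro ballI impI)
    fix x y assume x: "x \<in> cube D" and y: "y \<in> cube D" and ne: "x \<noteq> y \<and> \<not> cube_adj D x y"
    define S where "S = {k. k < D \<and> x ! k \<noteq> y ! k}"
    have fS: "finite S" unfolding S_def by simp
    have "S \<noteq> {}"
    proof
      assume "S = {}"
      hence "x = y" using x y by (intro nth_equalityI) (auto simp: S_def cube_def)
      thus False using ne by simp
    qed
    moreover have "card S \<noteq> 1" using ne x y by (simp add: cube_adj_def S_def)
    ultimately have "card S \<ge> 2" using fS
      by (metis One_nat_def card_0_eq less_2_cases not_le)
    then obtain a b where ab: "a \<in> S" "b \<in> S" "a < b"
    proof -
      obtain a b where "a \<in> S" "b \<in> S" "a \<noteq> b"
        using \<open>card S \<ge> 2\<close> by (metis card_le_Suc0_iff_eq fS not_less_eq_eq numeral_2_eq_2)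
      thus ?thesis using that by (metis linorder_neqE_nat)
    qed
    have "B x y * (sg (a+1) x - sg (a+1) y) * (sg (b+1) x - sg (b+1) y) = 0"
      using H[rule_format, of "a+1" "b+1" x y] x y ab expr[OF x y, of "a+1" "b+1" B]
      by (auto simp: S_def)
    thus "B x y = 0" using ab sg_diff[of "a+1" x y] sg_diff[of "b+1" x y]
      by (auto simp: S_def)
  qed
qed

end
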